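(* Let $k\ge1$ and work in $\mathbb{R}^{2k}$ with standard basis $e_1,\dots,e_{2k}$. Define polytopes \[ P_{2\ell}=\mathrm{Conv}\{0,\ \ell e_2,\ell e_4,\dots,\ell e_{2k},\ 2\ell e_1,2\ell e_3,\dots,2\ell e_{2k-1}\},\quad \ell\ge1, \] \[ P_{i}=\mathrm{Conv}\{0,\ \tfrac{i-1}{2} e_2,\dots,\tfrac{i-1}{2} e_{2k},\ i e_1,i e_3,\dots,i e_{2k-1}\},\quad i\ge1 \text{ odd}, \] and line segments $Q_{2\ell-1}=\mathrm{Conv}\{0,(2\ell-1)e_{2\ell-1}\}$, $Q_{2\ell}=\mathrm{Conv}\{0,\ell e_{2\ell}\}$ for $\ell\in[k]$. For every nonzero $w\in\mathbb{R}^{2k}$, the set \[ \mathcal I_w=\{i\in[2k]:\ Q_i\cap \mathrm{Init}_w(P_i)\neq\emptyset\} \] is nonempty.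
   Context: For $w\in\mathbb{R}^n$ and a convex polytope $P\subset\mathbb{R}^n$, $\mathrm{Init}_w(P)=\{x\in P:\langle w,x\rangle\le\langle w,y\rangle \text{ for all } y\in P\}$ is the face of $P$ on which the linear functional $x\mapsto\langle w,x\rangle$ attains its minimum. (The polytopes $P_i$ are the Newton polytopes, in the variable order $(\mu_1,s_1,\dots,\mu_k,s_k)$, of the $i$-th moment equation $\sum_\ell\bar\lambda_\ell M_i(\mu_\ell,s_\ell)-\bar m_i$ of a $k$-component univariate Gaussian mixture with known weights.) *)

theory Defs
  imports Main "HOL-Analysis.Analysis"
begin

text \<open>Vectors of R^(2k) are represented as functions nat => real, coordinates 1..2k
  (coordinates outside are irrelevant for points of the polytopes, which vanish there).\<close>

type_synonym vec = "nat \<Rightarrow> real"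

definition zero_vec :: vec where "zero_vec = (\<lambda>_. 0)"

definition basis_vec :: "nat \<Rightarrow> vec" ("\<ee>") where
  "basis_vec j = (\<lambda>i. if i = j then 1 else 0)"

definition scale_vec :: "real \<Rightarrow> vec \<Rightarrow> vec" where
  "scale_vec c v = (\<lambda>i. c * v i)"

definition convex_vec :: "vec set \<Rightarrow> bool" where
  "convex_vec S \<longleftrightarrow> (\<forall>x\<in>S. \<forall>y\<in>S. \<forall>u::real. 0 \<le> u \<and> u \<le> 1 \<longrightarrow>
      (\<lambda>i. u * x i + (1 - u) * y i) \<in> S)"

definition Conv :: "vec set \<Rightarrow> vec set" where
  "Conv S = convex_vec hull S"

definition ip :: "nat \<Rightarrow> vec \<Rightarrow> vec \<Rightarrow> real" where
  "ip k w x = (\<Sum>i = 1..2*k. w i * x i)"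

definition Init :: "nat \<Rightarrow> vec \<Rightarrow> vec set \<Rightarrow> vec set" where
  "Init k w P = {x \<in> P. \<forall>y\<in>P. ip k w x \<le> ip k w y}"

definition Ppoly :: "nat \<Rightarrow> nat \<Rightarrow> vec set" where
  "Ppoly k i =
    (if even i then
       (let l = i div 2 in
        Conv ({zero_vec}
              \<union> {scale_vec (real l) (\<ee> (2*j)) | j. j \<in> {1..k}}
              \<union> {scale_vec (real (2*l)) (\<ee> (2*j - 1)) | j. j \<in> {1..k}}))
     else
        Conv ({zero_vec}
              \<union> {scale_vec ((real i - 1) / 2) (\<ee> (2*j)) | j. j \<in> {1..k}}
              \<union> {scale_vec (real i) (\<ee> (2*j - 1)) | j. j \<in> {1..k}}))"

definition Qseg :: "nat \<Rightarrow> vec set" where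
  "Qseg i =
    (if even i then Conv {zero_vec, scale_vec (real (i div 2)) (\<ee> i)}
     else Conv {zero_vec, scale_vec (real i) (\<ee> i)})"

definition Iw :: "nat \<Rightarrow> vec \<Rightarrow> nat set" where
  "Iw k w = {i \<in> {1..2*k}. Qseg i \<inter> Init k w (Ppoly k i) \<noteq> {}}"

end

theory Submission
  imports Defs
begin

lemma ip_zero: "ip k w zero_vec = 0"
  by (simp add: ip_def zero_vec_def)

lemma ip_scale: "j \<in> {1..2*k} \<Longrightarrow> ip k w (scale_vec c (\<ee> j)) = c * w j"
  unfolding ip_def scale_vec_def basis_vec_def
  by (simp add: if_distrib cong: if_cong)

lemma convex_half: "convex_vec {y. a \<le> ip k w y}"
  unfolding convex_vec_def
proof (intro ballI allI impI)
  fix x y and u :: real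
  assume x: "x \<in> {y. a \<le> ip k w y}" and y: "y \<in> {y. a \<le> ip k w y}" and u: "0 \<le> u \<and> u \<le> 1"
  have e: "ip k w (\<lambda>i. u * x i + (1 - u) * y i) = u * ip k w x + (1-u) * ip k w y"
  proof -
    have "ip k w (\<lambda>i. u * x i + (1 - u) * y i) = (\<Sum>i = 1..2*k. u * (w i * x i) + (1-u) * (w i * y i))"
      unfolding ip_def by (rule sum.cong) (auto simp: algebra_simps)
    also have "\<dots> = u * ip k w x + (1-u) * ip k w y"
      unfolding ip_def by (simp add: sum.distrib sum_distrib_left)
    finally show ?thesis .
  qed
  have "u * a \<le> u * ip k w x" using x u by (simp add: mult_left_mono)
  moreover have "(1-u) * a \<le> (1-u) * ip k w y" using y u by (simp add: mult_left_mono)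
  ultimately show "(\<lambda>i. u * x i + (1 - u) * y i) \<in> {y. a \<le> ip k w y}"
    using e by (simp add: algebra_simps)
qed

lemma init_gen:
  assumes "x \<in> S" "\<forall>v\<in>S. ip k w x \<le> ip k w v"
  shows "x \<in> Init k w (Conv S)"
proof -
  have "x \<in> Conv S" unfolding Conv_def using assms(1) by (rule hull_inc)
  moreover have "Conv S \<subseteq> {y. ip k w x \<le> ip k w y}"
    unfolding Conv_def by (rule hull_minimal) (use assms(2) convex_half in auto)
  ultimately show ?thesis unfolding Init_def by auto
qed

lemma in_I:
  assumes "i \<in> {1..2*k}" "x \<in> Qseg i" "x \<in> Init k w (Ppoly k i)"
  shows "Iw k w \<noteq> {}"
  using assms unfolding Iw_def by blast

lemma Q_zero: "zero_vec \<in> Qseg i"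
  unfolding Qseg_def Conv_def by (auto intro: hull_inc)

theorem mainTheorem4:
  fixes k :: nat and w :: "nat \<Rightarrow> real"
  assumes "k \<ge> 1"
    and "\<forall>i. i \<notin> {1..2*k} \<longrightarrow> w i = 0"
    and "\<exists>i\<in>{1..2*k}. w i \<noteq> 0"
  shows "Iw k w \<noteq> {}"
proof (cases "\<forall>j\<in>{1..2*k}. w j \<ge> 0")
  case True
  have P2: "Ppoly k 2 = Conv ({zero_vec} \<union> {scale_vec 1 (\<ee> (2 * j)) |j. j \<in> {1..k}} \<union>
      {scale_vec 2 (\<ee> (2 * j - Suc 0)) |j. j \<in> {1..k}})" by (simp add: Ppoly_def)
  have "zero_vec \<in> Init k w (Ppoly k 2)"
    unfolding P2
  proof (rule init_gen)
    show "zero_vec \<in> {zero_vec} \<union> {scale_vec 1 (\<ee> (2 * j)) |j. j \<in> {1..k}} \<union>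
      {scale_vec 2 (\<ee> (2 * j - Suc 0)) |j. j \<in> {1..k}}" by simp
    show "\<forall>v\<in>{zero_vec} \<union> {scale_vec 1 (\<ee> (2 * j)) |j. j \<in> {1..k}} \<union>
      {scale_vec 2 (\<ee> (2 * j - Suc 0)) |j. j \<in> {1..k}}. ip k w zero_vec \<le> ip k w v"
    proof
      fix v assume "v \<in> {zero_vec} \<union> {scale_vec 1 (\<ee> (2 * j)) |j. j \<in> {1..k}} \<union>
      {scale_vec 2 (\<ee> (2 * j - Suc 0)) |j. j \<in> {1..k}}"
      then consider "v = zero_vec" | j where "j \<in> {1..k}" "v = scale_vec 1 (\<ee> (2 * j))"
        | j where "j \<in> {1..k}" "v = scale_vec 2 (\<ee> (2 * j - Suc 0))" by blast
      then show "ip k w zero_vec \<le> ip k w v"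
      proof cases
        case 1 then show ?thesis by simp
      next
        case (2 j)
        then have "2*j \<in> {1..2*k}" by auto
        then show ?thesis using 2 True by (simp add: ip_scale ip_zero)
      next
        case (3 j)
        then have "2*j - Suc 0 \<in> {1..2*k}" by auto
        then show ?thesis using 3 True by (simp add: ip_scale ip_zero)
      qed
    qed
  qed
  moreover have "(2::nat) \<in> {1..2*k}" using assms(1) by auto
  ultimately show ?thesis using in_I Q_zero by blast
next
  case False
  then obtain j0 where j0: "j0 \<in> {1..2*k}" "w j0 < 0" by force
  define A where "A = (\<lambda>j. w (2*j)) ` {1..k} \<union> (\<lambda>j. 2 * w (2*j-1)) ` {1..k}"
  define m where "m = Min A"
  have finA: "finite A" unfolding A_def by auto
  have neA: "A \<noteq> {}" unfolding A_def using assms(1) by auto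
  have mle1: "m \<le> w (2*j)" if "j \<in> {1..k}" for j
    unfolding m_def using finA that by (intro Min_le) (auto simp: A_def)
  have mle2: "m \<le> 2 * w (2*j-1)" if "j \<in> {1..k}" for j
    unfolding m_def using finA that by (intro Min_le) (auto simp: A_def)
  have mneg: "m < 0"
  proof (cases "even j0")
    case True
    then obtain j where "j0 = 2*j" by auto
    then show ?thesis using j0 mle1[of j] by auto
  next
    case False
    define j where "j = (j0 + 1) div 2"
    have jj: "j0 = 2*j - 1" "j \<ge> 1" "j \<le> k" using False j0(1) unfolding j_def by presburger+
    then show ?thesis using j0 mle2[of j] by auto
  qed
  have "m \<in> A" unfolding m_def using finA neA by (rule Min_in)
  then consider l where "l \<in> {1..k}" "m = w (2*l)" | l where "l \<in> {1..k}" "m = 2 * w (2*l-1)"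
    unfolding A_def by blast
  then show ?thesis
  proof cases
    case (1 l)
    let ?x = "scale_vec (real l) (\<ee> (2*l))"
    have xq: "?x \<in> Qseg (2*l)" unfolding Qseg_def Conv_def by (auto intro: hull_inc)
    have P2: "Ppoly k (2*l) = Conv ({zero_vec} \<union> {scale_vec (real l) (\<ee> (2 * j)) |j. j \<in> {1..k}} \<union>
        {scale_vec (2 * real l) (\<ee> (2 * j - Suc 0)) |j. j \<in> {1..k}})" by (simp add: Ppoly_def)
    have "?x \<in> Init k w (Ppoly k (2*l))"
      unfolding P2
    proof (rule init_gen)
      show "?x \<in> {zero_vec} \<union> {scale_vec (real l) (\<ee> (2 * j)) |j. j \<in> {1..k}} \<union>
        {scale_vec (2 * real l) (\<ee> (2 * j - Suc 0)) |j. j \<in> {1..k}}" using 1 by blast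
      have ipx: "ip k w ?x = real l * m" using 1 by (simp add: ip_scale)
      show "\<forall>v\<in>{zero_vec} \<union> {scale_vec (real l) (\<ee> (2 * j)) |j. j \<in> {1..k}} \<union>
        {scale_vec (2 * real l) (\<ee> (2 * j - Suc 0)) |j. j \<in> {1..k}}. ip k w ?x \<le> ip k w v"
      proof
        fix v assume "v \<in> {zero_vec} \<union> {scale_vec (real l) (\<ee> (2 * j)) |j. j \<in> {1..k}} \<union>
        {scale_vec (2 * real l) (\<ee> (2 * j - Suc 0)) |j. j \<in> {1..k}}"
        then consider "v = zero_vec" | j where "j \<in> {1..k}" "v = scale_vec (real l) (\<ee> (2 * j))"
          | j where "j \<in> {1..k}" "v = scale_vec (2 * real l) (\<ee> (2 * j - Suc 0))" by blast
        then show "ip k w ?x \<le> ip k w v"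
        proof cases
          case 1 then show ?thesis using ipx mneg by (simp add: ip_zero mult_nonneg_nonpos)
        next
          case (2 j)
          then have "2*j \<in> {1..2*k}" by auto
          then show ?thesis using 2 ipx mle1[of j] by (simp add: ip_scale mult_left_mono)
        next
          case (3 j)
          then have "2*j - Suc 0 \<in> {1..2*k}" by auto
          moreover have "real l * m \<le> real l * (2 * w (2*j - 1))"
            using mle2[of j] 3 by (simp add: mult_left_mono)
          ultimately show ?thesis using 3 ipx by (simp add: ip_scale)
        qed
      qed
    qed
    moreover have "2*l \<in> {1..2*k}" using 1 by auto
    ultimately show ?thesis using in_I xq by blast
  next
    case (2 l)
    let ?i = "2*l - 1"
    have oi: "odd ?i" using 2 by auto
    have ri: "real ?i = 2 * real l - 1" using 2 by (simp add: of_nat_diff)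
    let ?x = "scale_vec (real ?i) (\<ee> ?i)"
    have xq: "?x \<in> Qseg ?i" unfolding Qseg_def Conv_def using oi by (auto intro: hull_inc)
    have P2: "Ppoly k ?i = Conv ({zero_vec} \<union> {scale_vec ((real ?i - 1) / 2) (\<ee> (2 * j)) |j. j \<in> {1..k}} \<union>
        {scale_vec (real ?i) (\<ee> (2 * j - 1)) |j. j \<in> {1..k}})" using oi unfolding Ppoly_def by (simp only: if_False)
    have "?x \<in> Init k w (Ppoly k ?i)"
      unfolding P2
    proof (rule init_gen)
      show "?x \<in> {zero_vec} \<union> {scale_vec ((real ?i - 1) / 2) (\<ee> (2 * j)) |j. j \<in> {1..k}} \<union>
        {scale_vec (real ?i) (\<ee> (2 * j - 1)) |j. j \<in> {1..k}}" using 2 by blast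
      have ipx: "ip k w ?x = real ?i * w ?i" using 2 by (intro ip_scale) auto
      show "\<forall>v\<in>{zero_vec} \<union> {scale_vec ((real ?i - 1) / 2) (\<ee> (2 * j)) |j. j \<in> {1..k}} \<union>
        {scale_vec (real ?i) (\<ee> (2 * j - 1)) |j. j \<in> {1..k}}. ip k w ?x \<le> ip k w v"
      proof
        fix v assume "v \<in> {zero_vec} \<union> {scale_vec ((real ?i - 1) / 2) (\<ee> (2 * j)) |j. j \<in> {1..k}} \<union>
        {scale_vec (real ?i) (\<ee> (2 * j - 1)) |j. j \<in> {1..k}}"
        then consider "v = zero_vec" | j where "j \<in> {1..k}" "v = scale_vec ((real ?i - 1) / 2) (\<ee> (2 * j))"
          | j where "j \<in> {1..k}" "v = scale_vec (real ?i) (\<ee> (2 * j - 1))" by blast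
        then show "ip k w ?x \<le> ip k w v"
        proof cases
          case 1
          have "w ?i < 0" using 2 mneg by simp
          moreover have "real ?i \<ge> 0" by simp
          ultimately show ?thesis using 1 ipx by (simp add: ip_zero mult_nonneg_nonpos)
        next
          case (2 j)
          have jin: "2*j \<in> {1..2*k}" using 2 by auto
          have a: "(real ?i - 1) / 2 = real l - 1" using ri by simp
          have l1: "real l \<ge> 1" using \<open>l \<in> {1..k}\<close> by simp
          have "(real l - 1) * m \<le> (real l - 1) * w (2*j)"
            using mle1[OF 2(1)] l1 by (simp add: mult_left_mono)
          moreover have "w ?i < 0" using \<open>m = 2 * w (2*l-1)\<close> mneg by simp
          ultimately have "real ?i * w ?i \<le> (real l - 1) * w (2*j)"
            using ri \<open>m = 2 * w (2*l-1)\<close> by (simp add: algebra_simps)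
          moreover have "ip k w v = (real l - 1) * w (2*j)" unfolding 2(2) a ip_scale[OF jin] ..
          ultimately show ?thesis using ipx by simp
        next
          case (3 j)
          have jin: "2*j - 1 \<in> {1..2*k}" using 3 by auto
          have "w ?i \<le> w (2*j-1)" using mle2[OF 3(1)] \<open>m = 2 * w (2*l-1)\<close> by simp
          then have "real ?i * w ?i \<le> real ?i * w (2*j-1)" by (simp add: mult_left_mono)
          then show ?thesis using 3 ipx jin by (simp add: ip_scale)
        qed
      qed
    qed
    moreover have "?i \<in> {1..2*k}" using 2 by auto
    ultimately show ?thesis using in_I xq by blast
  qed
qed

end
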